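(* Any finitely passive learning dynamic guarantees constant regret.
   Context: $\Delta^n=\{\mathbf{x}\in\mathbb{R}^n: x_j\ge 0,\ \sum_j x_j=1\}$; $\mathbf{e}_j$ is the $j$-th standard basis vector. A learning dynamic over $n$ actions is specified by a conversion function $f:\mathbb{R}^n\to\Delta^n$: given an initial state $\mathbf{q}^0\in\mathbb{R}^n$ and an input (payoff) function $\mathbf{p}:[0,\infty)\to\mathbb{R}^n$ square integrable on bounded intervals, the state is $\mathbf{q}(t)=\mathbf{q}^0+\int_0^t\mathbf{p}(\tau)\,d\tau$ and the strategy is $\mathbf{x}(t)=f(\mathbf{q}(t))$. The learning operator with shift $\mathbf{x}^*\in\mathbb{R}^n$ has state $\mathbf{q}$, input $\mathbf{p}$, output $\mathbf{x}-\mathbf{x}^*$; it is finitely passive if there is a storage function $L:\mathbb{R}^n\to\mathbb{R}$, bounded from below, such that for every $\mathbf{q}^0$, every $\mathbf{p}$ and every $t\ge0$, $L(\mathbf{q}(t))\le L(\mathbf{q}^0)+\int_0^t\langle\mathbf{p}(\tau),\mathbf{x}(\tau)-\mathbf{x}^*\rangle\,d\tau$. A learning dynamic is finitely passive if for every action $j$ its learning operator with shift $\mathbf{e}_j$ is finitely passive. The regret at time $T>0$ is $\max_j\int_0^T p_j(\tau)\,d\tau-\int_0^T\langle\mathbf{p}(\tau),\mathbf{x}(\tau)\rangle\,d\tau$. A learning dynamic guarantees constant regret if for every $\mathbf{p}$ and every $T>0$ the regret at time $T$ is bounded above by a constant depending only on $\mathbf{q}^0$. *)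

theory Defs
  imports "HOL-Analysis.Analysis"
begin

definition prob_simplex :: "(real^'n) set" where
  "prob_simplex = {x. (\<forall>j. x $ j \<ge> 0) \<and> (\<Sum>j\<in>UNIV. x $ j) = 1}"

definition admissible_input :: "(real \<Rightarrow> real^'n) \<Rightarrow> bool" where
  "admissible_input p \<longleftrightarrow>
     set_borel_measurable lborel {0..} p \<and>
     (\<forall>t\<ge>0. set_integrable lborel {0..t} (\<lambda>\<tau>. (norm (p \<tau>))^2))"

definition state :: "real^'n \<Rightarrow> (real \<Rightarrow> real^'n) \<Rightarrow> real \<Rightarrow> real^'n" where
  "state q0 p t = q0 + (LINT \<tau>:{0..t}|lborel. p \<tau>)"

definition finitely_passive_op ::
  "(real^'n \<Rightarrow> real^'n) \<Rightarrow> real^'n \<Rightarrow> bool" where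
  "finitely_passive_op f xs \<longleftrightarrow>
     (\<exists>L :: real^'n \<Rightarrow> real. bdd_below (range L) \<and>
        (\<forall>q0 p t. admissible_input p \<and> t \<ge> 0 \<longrightarrow>
           L (state q0 p t) \<le> L q0 +
             (LINT \<tau>:{0..t}|lborel. inner (p \<tau>) (f (state q0 p \<tau>) - xs))))"

definition finitely_passive :: "(real^'n \<Rightarrow> real^'n) \<Rightarrow> bool" where
  "finitely_passive f \<longleftrightarrow> (\<forall>j. finitely_passive_op f (axis j 1))"

definition regret ::
  "(real^'n \<Rightarrow> real^'n) \<Rightarrow> real^'n \<Rightarrow> (real \<Rightarrow> real^'n) \<Rightarrow> real \<Rightarrow> real" where
  "regret f q0 p T =
     Max (range (\<lambda>j. LINT \<tau>:{0..T}|lborel. p \<tau> $ j))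
     - (LINT \<tau>:{0..T}|lborel. inner (p \<tau>) (f (state q0 p \<tau>)))"

definition guarantees_constant_regret :: "(real^'n \<Rightarrow> real^'n) \<Rightarrow> bool" where
  "guarantees_constant_regret f \<longleftrightarrow>
     (\<forall>q0. \<exists>C. \<forall>p T. admissible_input p \<and> T > 0 \<longrightarrow> regret f q0 p T \<le> C)"

end

theory Submission
  imports Defs
begin

lemma adm_meas:
  assumes "admissible_input (p :: real \<Rightarrow> real^'n)"
  shows "(\<lambda>x. indicator {0..} x *\<^sub>R p x) \<in> borel_measurable lborel"
  using assms unfolding admissible_input_def set_borel_measurable_def by simp

lemma adm_meas_T:
  assumes "admissible_input (p :: real \<Rightarrow> real^'n)" "T \<ge> 0"
  shows "(\<lambda>x. indicator {0..T} x *\<^sub>R p x) \<in> borel_measurable lborel"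
proof -
  have m[measurable]: "(\<lambda>x. indicator {0..} x *\<^sub>R p x) \<in> borel_measurable lborel"
    by (rule adm_meas[OF assms(1)])
  have "(\<lambda>x. indicator {0..T} x *\<^sub>R p x) = (\<lambda>x. indicator {0..T} x *\<^sub>R (indicator {0..} x *\<^sub>R p x))"
    by (auto simp: indicator_def fun_eq_iff)
  also have "\<dots> \<in> borel_measurable lborel" by measurable
  finally show ?thesis .
qed

lemma adm_norm_int:
  assumes "admissible_input (p :: real \<Rightarrow> real^'n)" "T \<ge> 0"
  shows "set_integrable lborel {0..T} (\<lambda>x. norm (p x))"
proof -
  have sq: "integrable lborel (\<lambda>x. indicator {0..T} x *\<^sub>R (norm (p x))^2)"
    using assms unfolding admissible_input_def set_integrable_def by auto
  have one: "integrable lborel (\<lambda>x. indicator {0..T} x *\<^sub>R (1::real))"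
    using integrable_indicator[of "{0..T}" lborel "1::real"] by (simp add: emeasure_lborel_Icc_eq)
  have mT[measurable]: "(\<lambda>x. indicator {0..T} x *\<^sub>R p x) \<in> borel_measurable lborel"
    by (rule adm_meas_T[OF assms])
  have eq: "(\<lambda>x. indicator {0..T} x *\<^sub>R norm (p x)) = (\<lambda>x. norm (indicator {0..T} x *\<^sub>R p x))"
    by (auto simp: indicator_def fun_eq_iff)
  show ?thesis unfolding set_integrable_def
  proof (rule Bochner_Integration.integrable_bound[OF Bochner_Integration.integrable_add[OF one sq]])
    show "(\<lambda>x. indicator {0..T} x *\<^sub>R norm (p x)) \<in> borel_measurable lborel"
      unfolding eq by measurable
    have b: "norm (p x) \<le> 1 + (norm (p x))^2" for x
    proof (cases "norm (p x) \<le> 1")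
      case True then show ?thesis by (simp add: add_increasing2)
    next
      case False then have "norm (p x) * 1 \<le> norm (p x) * norm (p x)"
        by (intro mult_left_mono) auto
      then show ?thesis by (simp add: power2_eq_square)
    qed
    show "AE x in lborel. norm (indicator {0..T} x *\<^sub>R norm (p x)) \<le>
      norm (indicator {0..T} x *\<^sub>R (1::real) + indicator {0..T} x *\<^sub>R (norm (p x))^2)"
    proof (rule AE_I2)
      fix x show "norm (indicator {0..T} x *\<^sub>R norm (p x)) \<le>
        norm (indicator {0..T} x *\<^sub>R (1::real) + indicator {0..T} x *\<^sub>R (norm (p x))^2)"
        using b[of x] by (simp add: indicator_def)
    qed
  qed
qed

lemma state_meas:
  assumes "admissible_input (p :: real \<Rightarrow> real^'n)"
  shows "(\<lambda>t. state q0 p t) \<in> borel_measurable lborel"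
proof -
  have m[measurable]: "(\<lambda>x. indicator {0..} x *\<^sub>R p x) \<in> borel_measurable lborel"
    by (rule adm_meas[OF assms(1)])
  have eq: "(\<lambda>(t,x). indicator {0..t} x *\<^sub>R p x) =
     (\<lambda>z. indicator {z. snd z \<le> fst z} z *\<^sub>R (indicator {0..} (snd z) *\<^sub>R p (snd z)))"
    by (auto simp: indicator_def fun_eq_iff)
  have "(\<lambda>z::real\<times>real. indicator {z. snd z \<le> fst z} z *\<^sub>R (indicator {0..} (snd z) *\<^sub>R p (snd z)))
     \<in> borel_measurable (lborel \<Otimes>\<^sub>M lborel)"
    by measurable
  then have "case_prod (\<lambda>t x. indicator {0..t} x *\<^sub>R p x) \<in> borel_measurable (lborel \<Otimes>\<^sub>M lborel)"
    unfolding eq .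
  then have "(\<lambda>t. LINT x|lborel. indicator {0..t} x *\<^sub>R p x) \<in> borel_measurable lborel"
    by (rule lborel.borel_measurable_lebesgue_integral)
  then show ?thesis unfolding state_def set_lebesgue_integral_def by measurable
qed

lemma comp_int:
  assumes "admissible_input (p :: real \<Rightarrow> real^'n)" "T \<ge> 0"
  shows "set_integrable lborel {0..T} (\<lambda>x. p x $ j)"
  unfolding set_integrable_def
proof (rule Bochner_Integration.integrable_bound[OF adm_norm_int[OF assms, unfolded set_integrable_def]])
  have [measurable]: "(\<lambda>x. indicator {0..T} x *\<^sub>R p x) \<in> borel_measurable lborel"
    by (rule adm_meas_T[OF assms])
  have eq: "(\<lambda>x. indicator {0..T} x *\<^sub>R (p x $ j)) = (\<lambda>x. (indicator {0..T} x *\<^sub>R p x) $ j)"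
    by (auto simp: indicator_def fun_eq_iff)
  show "(\<lambda>x. indicator {0..T} x *\<^sub>R (p x $ j)) \<in> borel_measurable lborel"
    unfolding eq by (rule measurable_compose[OF adm_meas_T[OF assms] borel_measurable_nth])
  show "AE x in lborel. norm (indicator {0..T} x *\<^sub>R (p x $ j)) \<le> norm (indicator {0..T} x *\<^sub>R norm (p x))"
    by (rule AE_I2) (simp add: indicator_def component_le_norm_cart)
qed

lemma inner_int:
  fixes f :: "real^'n \<Rightarrow> real^'n"
  assumes conv: "\<And>q. f q \<in> prob_simplex"
    and meas[measurable]: "f \<in> borel_measurable borel"
    and "admissible_input p" "T \<ge> 0"
  shows "set_integrable lborel {0..T} (\<lambda>x. inner (p x) (f (state q0 p x)))"
  unfolding set_integrable_def
proof (rule Bochner_Integration.integrable_bound[OF adm_norm_int[OF assms(3,4), unfolded set_integrable_def]])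
  have [measurable]: "(\<lambda>x. indicator {0..T} x *\<^sub>R p x) \<in> borel_measurable lborel"
    by (rule adm_meas_T[OF assms(3,4)])
  have [measurable]: "(\<lambda>t. state q0 p t) \<in> borel_measurable lborel"
    by (rule state_meas[OF assms(3)])
  have eq: "(\<lambda>x. indicator {0..T} x *\<^sub>R inner (p x) (f (state q0 p x))) =
     (\<lambda>x. inner (indicator {0..T} x *\<^sub>R p x) (f (state q0 p x)))"
    by (auto simp: indicator_def fun_eq_iff)
  show "(\<lambda>x. indicator {0..T} x *\<^sub>R inner (p x) (f (state q0 p x))) \<in> borel_measurable lborel"
    unfolding eq by measurable
  have nf: "norm (f q) \<le> 1" for q
  proof -
    have "norm (f q) \<le> (\<Sum>i\<in>UNIV. \<bar>f q $ i\<bar>)" by (rule norm_le_l1_cart)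
    also have "\<dots> = (\<Sum>i\<in>UNIV. f q $ i)" using conv[of q] by (simp add: prob_simplex_def)
    also have "\<dots> = 1" using conv[of q] by (simp add: prob_simplex_def)
    finally show ?thesis .
  qed
  have b: "\<bar>inner (p x) (f (state q0 p x))\<bar> \<le> norm (p x)" for x
  proof -
    have "\<bar>inner (p x) (f (state q0 p x))\<bar> \<le> norm (p x) * norm (f (state q0 p x))"
      by (rule Cauchy_Schwarz_ineq2)
    also have "\<dots> \<le> norm (p x) * 1" by (intro mult_left_mono nf) auto
    finally show ?thesis by simp
  qed
  show "AE x in lborel. norm (indicator {0..T} x *\<^sub>R inner (p x) (f (state q0 p x))) \<le> norm (indicator {0..T} x *\<^sub>R norm (p x))"
    by (rule AE_I2) (use b in \<open>simp add: indicator_def\<close>)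
qed

theorem theorem4p2:
  fixes f :: "real^'n \<Rightarrow> real^'n"
  assumes conv: "\<And>q. f q \<in> prob_simplex"
    and meas: "f \<in> borel_measurable borel"
    and fp: "finitely_passive f"
  shows "guarantees_constant_regret f"
  unfolding guarantees_constant_regret_def
proof
  fix q0 :: "real^'n"
  have "\<forall>j. \<exists>L :: real^'n \<Rightarrow> real. bdd_below (range L) \<and>
        (\<forall>q0 p t. admissible_input p \<and> t \<ge> 0 \<longrightarrow>
           L (state q0 p t) \<le> L q0 +
             (LINT \<tau>:{0..t}|lborel. inner (p \<tau>) (f (state q0 p \<tau>) - axis j 1)))"
    using fp unfolding finitely_passive_def finitely_passive_op_def by blast
  then obtain LL where LL0: "\<forall>j. bdd_below (range (LL j)) \<and>
        (\<forall>q0 p t. admissible_input p \<and> t \<ge> 0 \<longrightarrow>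
           LL j (state q0 p t) \<le> LL j q0 +
             (LINT \<tau>:{0..t}|lborel. inner (p \<tau>) (f (state q0 p \<tau>) - axis j 1)))"
    by (rule choice[THEN exE]) blast
  have LL1: "\<And>j. bdd_below (range (LL j))" by (rule conjunct1[OF spec[OF LL0]])
  have LL2: "\<And>j q0 p t. admissible_input p \<Longrightarrow> t \<ge> 0 \<Longrightarrow>
           LL j (state q0 p t) \<le> LL j q0 +
             (LINT \<tau>:{0..t}|lborel. inner (p \<tau>) (f (state q0 p \<tau>) - axis j 1))"
    using conjunct2[OF spec[OF LL0]] by blast
  have "\<forall>j. \<exists>b. \<forall>q. b \<le> LL j q" using LL1 unfolding bdd_below_def by blast
  then obtain B where B0: "\<forall>j q. B j \<le> LL j q"
    by (rule choice[THEN exE]) blast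
  have B: "\<And>j q. B j \<le> LL j q" using B0 by blast
  show "\<exists>C. \<forall>p T. admissible_input p \<and> T > 0 \<longrightarrow> regret f q0 p T \<le> C"
  proof (intro exI allI impI)
    fix p :: "real \<Rightarrow> real^'n" and T :: real
    assume a: "admissible_input p \<and> T > 0"
    then have adm: "admissible_input p" and T: "T \<ge> 0" by auto
    let ?g = "\<lambda>j. LINT \<tau>:{0..T}|lborel. p \<tau> $ j"
    have "Max (range ?g) \<in> range ?g" by (rule Max_in) auto
    then obtain j where j: "Max (range ?g) = ?g j" by (metis rangeE)
    have ieq: "(LINT \<tau>:{0..T}|lborel. inner (p \<tau>) (f (state q0 p \<tau>) - axis j 1)) =
       (LINT \<tau>:{0..T}|lborel. inner (p \<tau>) (f (state q0 p \<tau>))) - ?g j"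
    proof -
      have "(LINT \<tau>:{0..T}|lborel. inner (p \<tau>) (f (state q0 p \<tau>) - axis j 1)) =
         (LINT \<tau>:{0..T}|lborel. inner (p \<tau>) (f (state q0 p \<tau>)) - p \<tau> $ j)"
        by (intro set_lebesgue_integral_cong) (auto simp: inner_diff_right inner_axis)
      also have "\<dots> = (LINT \<tau>:{0..T}|lborel. inner (p \<tau>) (f (state q0 p \<tau>))) - ?g j"
        by (rule set_integral_diff(2)[OF inner_int[OF conv meas adm T] comp_int[OF adm T]])
      finally show ?thesis .
    qed
    have "regret f q0 p T = ?g j - (LINT \<tau>:{0..T}|lborel. inner (p \<tau>) (f (state q0 p \<tau>)))"
      unfolding regret_def j ..
    also have "\<dots> \<le> LL j q0 - LL j (state q0 p T)"
      using LL2[OF adm T, of j q0] ieq by linarith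
    also have "\<dots> \<le> \<bar>LL j q0 - B j\<bar>" using B[of j "state q0 p T"] by linarith
    also have "\<dots> \<le> (\<Sum>i\<in>UNIV. \<bar>LL i q0 - B i\<bar>)"
      by (rule member_le_sum) auto
    finally show "regret f q0 p T \<le> (\<Sum>i\<in>UNIV. \<bar>LL i q0 - B i\<bar>)" .
  qed
qed

end
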